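(* Let $\mathcal{X}$ and $\mathcal{Y}$ be mm-spaces. If $L^{\mathcal{U}}_h(\mathcal{X},\mathcal{Y})=0$, then $(h^r_{\mathcal{X}})_\#\mu_X=(h^r_{\mathcal{Y}})_\#\mu_Y$ (as Borel probability measures on $\mathbb{R}$) for Lebesgue-almost every $r>0$.
   Context: A metric measure space (mm-space) is a triple $(X,d_X,\mu_X)$ with $(X,d_X)$ compact metric and $\mu_X$ a Borel probability measure of full support. $h_{\mathcal{X}}(x,r)=\mu_X(\{x'\in X: d_X(x,x')\le r\})$ and, for fixed $r>0$, $h^r_{\mathcal{X}}:X\to\mathbb{R}$ is $h^r_{\mathcal{X}}(x)=h_{\mathcal{X}}(x,r)$. With $c_{\mathcal{X},\mathcal{Y}}(x,y)=\int_0^\infty|h_{\mathcal{X}}(x,t)-h_{\mathcal{Y}}(y,t)|\,dt$ and $\mathcal{U}(\mu_X,\mu_Y)$ the set of probability measures on $X\times Y$ with marginals $\mu_X,\mu_Y$, $L^{\mathcal{U}}_h(\mathcal{X},\mathcal{Y})=\inf_{\mu\in\mathcal{U}(\mu_X,\mu_Y)}\int_{X\times Y}c_{\mathcal{X},\mathcal{Y}}\,d\mu$. *)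

theory Defs
  imports "HOL-Analysis.Analysis" "HOL-Probability.Probability"
begin

definition borel_of :: "'a topology \<Rightarrow> 'a measure" where
  "borel_of T = sigma (topspace T) {U. openin T U}"

definition mm_space :: "'a set \<Rightarrow> ('a \<Rightarrow> 'a \<Rightarrow> real) \<Rightarrow> 'a measure \<Rightarrow> bool" where
  "mm_space X d mu \<longleftrightarrow>
     Metric_space X d \<and>
     compact_space (Metric_space.mtopology X d) \<and>
     prob_space mu \<and>
     space mu = X \<and>
     sets mu = sets (borel_of (Metric_space.mtopology X d)) \<and>
     (\<forall>U. openin (Metric_space.mtopology X d) U \<and> U \<noteq> {} \<longrightarrow> measure mu U > 0)"

definition hfun :: "'a set \<Rightarrow> ('a \<Rightarrow> 'a \<Rightarrow> real) \<Rightarrow> 'a measure \<Rightarrow> 'a \<Rightarrow> real \<Rightarrow> real" where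
  "hfun X d mu x r = measure mu {x' \<in> X. d x x' \<le> r}"

definition cost_h ::
  "'a set \<Rightarrow> ('a \<Rightarrow> 'a \<Rightarrow> real) \<Rightarrow> 'a measure \<Rightarrow>
   'b set \<Rightarrow> ('b \<Rightarrow> 'b \<Rightarrow> real) \<Rightarrow> 'b measure \<Rightarrow> 'a \<Rightarrow> 'b \<Rightarrow> ennreal" where
  "cost_h X dX muX Y dY muY x y =
     (\<integral>\<^sup>+ t. indicator {0..} t * ennreal \<bar>hfun X dX muX x t - hfun Y dY muY y t\<bar> \<partial>lborel)"

definition couplings :: "'a measure \<Rightarrow> 'b measure \<Rightarrow> ('a \<times> 'b) measure set" where
  "couplings muX muY = {p. prob_space p \<and> sets p = sets (muX \<Otimes>\<^sub>M muY) \<and>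
      distr p muX fst = muX \<and> distr p muY snd = muY}"

definition L_U_h ::
  "'a set \<Rightarrow> ('a \<Rightarrow> 'a \<Rightarrow> real) \<Rightarrow> 'a measure \<Rightarrow>
   'b set \<Rightarrow> ('b \<Rightarrow> 'b \<Rightarrow> real) \<Rightarrow> 'b measure \<Rightarrow> ennreal" where
  "L_U_h X dX muX Y dY muY =
     (INF p \<in> couplings muX muY. \<integral>\<^sup>+ z. cost_h X dX muX Y dY muY (fst z) (snd z) \<partial>p)"

end

theory Submission
  imports Defs
begin

lemma mm_openin_sets:
  assumes "mm_space X d mu" "openin (Metric_space.mtopology X d) U"
  shows "U \<in> sets mu"
proof -
  have ms: "Metric_space X d" and s: "sets mu = sets (borel_of (Metric_space.mtopology X d))"
    using assms(1) unfolding mm_space_def by auto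
  have sub: "{U. openin (Metric_space.mtopology X d) U} \<subseteq> Pow X"
    using openin_subset Metric_space.topspace_mtopology[OF ms] by fastforce
  show ?thesis unfolding s borel_of_def Metric_space.topspace_mtopology[OF ms]
    using sub assms(2) by (simp add: sets_measure_of)
qed

lemma mm_closedin_sets:
  assumes "mm_space X d mu" "closedin (Metric_space.mtopology X d) U"
  shows "U \<in> sets mu"
proof -
  have ms: "Metric_space X d" and sp: "space mu = X"
    using assms(1) unfolding mm_space_def by auto
  have "openin (Metric_space.mtopology X d) (X - U)"
    using assms(2) Metric_space.topspace_mtopology[OF ms] by (simp add: closedin_def)
  then have "X - U \<in> sets mu" by (rule mm_openin_sets[OF assms(1)])
  then have "space mu - (X - U) \<in> sets mu" by blast
  moreover have "space mu - (X - U) = U" using sp closedin_subset[OF assms(2)]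
    Metric_space.topspace_mtopology[OF ms] by auto
  ultimately show ?thesis by simp
qed

lemma mm_ball_sets:
  assumes "mm_space X d mu" "x \<in> X"
  shows "{x' \<in> X. d x x' \<le> r} \<in> sets mu"
proof -
  have ms: "Metric_space X d" using assms(1) unfolding mm_space_def by auto
  have "{x' \<in> X. d x x' \<le> r} = Metric_space.mcball X d x r"
    using assms(2) Metric_space.in_mcball[OF ms] by auto
  then show ?thesis using mm_closedin_sets[OF assms(1)] Metric_space.closedin_mcball[OF ms] by simp
qed

lemma hfun_mono:
  assumes "mm_space X d mu" "x \<in> X" "r \<le> s"
  shows "hfun X d mu x r \<le> hfun X d mu x s"
proof -
  interpret prob_space mu using assms(1) unfolding mm_space_def by auto
  show ?thesis unfolding hfun_def
    by (rule finite_measure_mono) (use assms mm_ball_sets in auto)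
qed

lemma hfun_right_lim:
  assumes "mm_space X d mu" "x \<in> X"
  shows "(\<lambda>n. hfun X d mu x (r + 1 / real (Suc n))) \<longlonglongrightarrow> hfun X d mu x r"
proof -
  interpret prob_space mu using assms(1) unfolding mm_space_def by auto
  define A where "A n = {x' \<in> X. d x x' \<le> r + 1 / real (Suc n)}" for n
  have "range A \<subseteq> sets mu" using mm_ball_sets[OF assms] by (auto simp: A_def)
  moreover have "decseq A"
  proof (rule decseq_SucI)
    fix n
    have "1 / real (Suc (Suc n)) \<le> 1 / real (Suc n)"
      by (simp add: frac_le)
    then show "A (Suc n) \<subseteq> A n" by (auto simp: A_def)
  qed
  ultimately have "(\<lambda>n. measure mu (A n)) \<longlonglongrightarrow> measure mu (\<Inter>i. A i)"
    by (rule finite_Lim_measure_decseq)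
  moreover have "(\<Inter>i. A i) = {x' \<in> X. d x x' \<le> r}"
  proof safe
    fix y assume y: "y \<in> (\<Inter>i. A i)"
    then show "y \<in> X" by (auto simp: A_def)
    have "\<forall>n. d x y \<le> r + 1 / real (Suc n)" using y by (auto simp: A_def)
    then show "d x y \<le> r"
    proof (rule contrapos_pp)
      assume "\<not> d x y \<le> r"
      then obtain n where "inverse (real (Suc n)) < d x y - r"
        using reals_Archimedean[of "d x y - r"] by auto
      then show "\<not> (\<forall>n. d x y \<le> r + 1 / real (Suc n))"
        by (auto simp: field_simps intro!: exI[of _ n])
    qed
  qed (auto simp: A_def intro!: add_increasing2)
  ultimately show ?thesis by (simp add: hfun_def A_def)
qed

lemma hfun_meas:
  assumes "mm_space X d mu"
  shows "(\<lambda>x. hfun X d mu x r) \<in> borel_measurable mu"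
proof -
  interpret prob_space mu using assms(1) unfolding mm_space_def by auto
  have ms: "Metric_space X d" and sp: "space mu = X" using assms unfolding mm_space_def by auto
  show ?thesis unfolding borel_measurable_iff_less
  proof
    fix c :: real
    have "openin (Metric_space.mtopology X d) {w \<in> X. hfun X d mu w r < c}"
      unfolding Metric_space.openin_mtopology[OF ms]
    proof (intro conjI allI impI)
      fix x assume x: "x \<in> {w \<in> X. hfun X d mu w r < c}"
      then have xX: "x \<in> X" by auto
      have "eventually (\<lambda>n. hfun X d mu x (r + 1 / real (Suc n)) < c) sequentially"
        using order_tendstoD(2)[OF hfun_right_lim[OF assms xX]] x by auto
      then obtain n where n: "hfun X d mu x (r + 1 / real (Suc n)) < c"
        by (auto simp: eventually_sequentially)
      show "\<exists>e>0. Metric_space.mball X d x e \<subseteq> {w \<in> X. hfun X d mu w r < c}"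
      proof (intro exI conjI)
        show "0 < 1 / real (Suc n)" by simp
        show "Metric_space.mball X d x (1 / real (Suc n)) \<subseteq> {w \<in> X. hfun X d mu w r < c}"
        proof
          fix y assume "y \<in> Metric_space.mball X d x (1 / real (Suc n))"
          then have y: "y \<in> X" "d x y < 1 / real (Suc n)"
            using Metric_space.in_mball[OF ms] by auto
          have "{x' \<in> X. d y x' \<le> r} \<subseteq> {x' \<in> X. d x x' \<le> r + 1 / real (Suc n)}"
          proof safe
            fix z assume "z \<in> X" "d y z \<le> r"
            moreover have "d x z \<le> d x y + d y z"
              using Metric_space.triangle[OF ms xX y(1) \<open>z \<in> X\<close>] .
            ultimately show "d x z \<le> r + 1 / real (Suc n)" using y(2) by linarith
          qed
          then have "hfun X d mu y r \<le> hfun X d mu x (r + 1 / real (Suc n))"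
            unfolding hfun_def
            by (rule finite_measure_mono) (rule mm_ball_sets[OF assms xX])
          with n y show "y \<in> {w \<in> X. hfun X d mu w r < c}" by auto
        qed
      qed
    qed auto
    then show "{w \<in> space mu. hfun X d mu w r < c} \<in> sets mu"
      using mm_openin_sets[OF assms] sp by simp
  qed
qed

lemma hfun_joint_meas:
  assumes "mm_space X d mu"
  shows "(\<lambda>z. hfun X d mu (fst z) (snd z)) \<in> borel_measurable (mu \<Otimes>\<^sub>M lborel)"
proof (rule borel_measurable_LIMSEQ_real)
  define s where "s n t = (real_of_int \<lfloor>real (Suc n) * t\<rfloor> + 1) / real (Suc n)" for n t
  have sp: "space mu = X" using assms unfolding mm_space_def by auto
  show "\<And>n. (\<lambda>z. hfun X d mu (fst z) (s n (snd z))) \<in> borel_measurable (mu \<Otimes>\<^sub>M lborel)"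
  proof -
    fix n
    have f: "(\<lambda>z. hfun X d mu (fst z) ((real_of_int i + 1) / real (Suc n))) \<in> borel_measurable (mu \<Otimes>\<^sub>M lborel)" for i
      using measurable_compose[OF measurable_fst hfun_meas[OF assms]] by simp
    have g: "(\<lambda>z. \<lfloor>real (Suc n) * snd z\<rfloor>) \<in> measurable (mu \<Otimes>\<^sub>M lborel) (count_space UNIV)"
      by measurable
    have "(\<lambda>z. (\<lambda>i z. hfun X d mu (fst z) ((real_of_int i + 1) / real (Suc n)))
        (\<lfloor>real (Suc n) * snd z\<rfloor>) z) \<in> borel_measurable (mu \<Otimes>\<^sub>M lborel)"
      by (rule measurable_compose_countable'[OF f g]) auto
    then show "(\<lambda>z. hfun X d mu (fst z) (s n (snd z))) \<in> borel_measurable (mu \<Otimes>\<^sub>M lborel)"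
      by (simp add: s_def)
  qed
  fix z :: "_ \<times> real" assume "z \<in> space (mu \<Otimes>\<^sub>M lborel)"
  then have x: "fst z \<in> X" by (auto simp: space_pair_measure sp)
  define t where "t = snd z"
  have lo: "t \<le> s n t" for n
  proof -
    have "real (Suc n) * t < real_of_int \<lfloor>real (Suc n) * t\<rfloor> + 1" by linarith
    then show ?thesis unfolding s_def by (simp add: field_simps)
  qed
  have hi: "s n t \<le> t + 1 / real (Suc n)" for n
  proof -
    have "real_of_int \<lfloor>real (Suc n) * t\<rfloor> + 1 \<le> real (Suc n) * t + 1" by linarith
    then have "s n t \<le> (real (Suc n) * t + 1) / real (Suc n)"
      unfolding s_def by (intro divide_right_mono) auto
    also have "\<dots> = t + 1 / real (Suc n)" by (simp add: field_simps)
    finally show ?thesis .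
  qed
  show "(\<lambda>n. hfun X d mu (fst z) (s n (snd z))) \<longlonglongrightarrow> hfun X d mu (fst z) (snd z)"
    unfolding t_def[symmetric]
  proof (rule tendsto_sandwich[OF _ _ tendsto_const hfun_right_lim[OF assms x]])
    show "\<forall>\<^sub>F n in sequentially. hfun X d mu (fst z) t \<le> hfun X d mu (fst z) (s n t)"
      using hfun_mono[OF assms x lo] by simp
    show "\<forall>\<^sub>F n in sequentially. hfun X d mu (fst z) (s n t) \<le> hfun X d mu (fst z) (t + 1 / real (Suc n))"
      using hfun_mono[OF assms x hi] by simp
  qed
qed

definition phi :: "int \<Rightarrow> nat \<Rightarrow> real \<Rightarrow> real" where
  "phi i n s = min 1 (max 0 (real_of_int i + 1 - real (Suc n) * s))"

lemma phi_lip: "\<bar>phi i n u - phi i n v\<bar> \<le> real (Suc n) * \<bar>u - v\<bar>"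
proof -
  have "\<bar>(real_of_int i + 1 - real (Suc n) * u) - (real_of_int i + 1 - real (Suc n) * v)\<bar>
      = real (Suc n) * \<bar>u - v\<bar>"
    by (simp add: abs_mult right_diff_distrib[symmetric] abs_minus_commute)
  then show ?thesis unfolding phi_def by linarith
qed

lemma phi_bounds: "0 \<le> phi i n s" "phi i n s \<le> 1"
  unfolding phi_def by auto

lemma phi_meas[measurable]: "phi i n \<in> borel_measurable borel"
  unfolding phi_def[abs_def] by measurable

lemma phi_lim:
  "(\<lambda>n. phi \<lceil>real (Suc n) * a\<rceil> n s) \<longlonglongrightarrow> indicator {..a} s"
proof (cases "s \<le> a")
  case True
  have "phi \<lceil>real (Suc n) * a\<rceil> n s = 1" for n
  proof -
    have "real (Suc n) * s \<le> real (Suc n) * a" using True by (intro mult_left_mono) auto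
    also have "\<dots> \<le> real_of_int \<lceil>real (Suc n) * a\<rceil>" by linarith
    finally show ?thesis unfolding phi_def by auto
  qed
  then show ?thesis using True by simp
next
  case False
  obtain N :: nat where N: "2 / (s - a) < real N" using reals_Archimedean2 by blast
  have "phi \<lceil>real (Suc n) * a\<rceil> n s = 0" if "n \<ge> N" for n
  proof -
    have "2 / (s - a) < real (Suc n)" using N that by linarith
    then have "2 < real (Suc n) * (s - a)" using False by (simp add: field_simps)
    moreover have "real_of_int \<lceil>real (Suc n) * a\<rceil> < real (Suc n) * a + 1" by linarith
    ultimately have "real_of_int \<lceil>real (Suc n) * a\<rceil> + 1 - real (Suc n) * s \<le> 0"
      by (simp add: right_diff_distrib)
    then show ?thesis unfolding phi_def by auto
  qed
  then have "eventually (\<lambda>n. phi \<lceil>real (Suc n) * a\<rceil> n s = indicator {..a} s) sequentially"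
    using False by (auto simp: eventually_sequentially)
  then show ?thesis by (rule tendsto_eventually)
qed

lemma phi_integral_lim:
  assumes "real_distribution M"
  shows "(\<lambda>n. \<integral>s. phi \<lceil>real (Suc n) * a\<rceil> n s \<partial>M) \<longlonglongrightarrow> measure M {..a}"
proof -
  interpret real_distribution M by fact
  have "(\<lambda>n. \<integral>s. phi \<lceil>real (Suc n) * a\<rceil> n s \<partial>M) \<longlonglongrightarrow> (\<integral>s. indicator {..a} s \<partial>M)"
  proof (rule integral_dominated_convergence[where w="\<lambda>_. 1"])
    show "indicator {..a} \<in> borel_measurable M" by simp
    show "\<And>n. (\<lambda>s. phi \<lceil>real (Suc n) * a\<rceil> n s) \<in> borel_measurable M" by simp
    show "integrable M (\<lambda>_. 1::real)" by simp
    show "AE s in M. (\<lambda>n. phi \<lceil>real (Suc n) * a\<rceil> n s) \<longlonglongrightarrow> indicator {..a} s"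
      using phi_lim by simp
    show "\<And>n. AE s in M. norm (phi \<lceil>real (Suc n) * a\<rceil> n s) \<le> 1"
      using phi_bounds by simp
  qed
  then show ?thesis by simp
qed

lemma dist_eq_phi:
  assumes "real_distribution M1" "real_distribution M2"
    and "\<And>i n. (\<integral>s. phi i n s \<partial>M1) = (\<integral>s. phi i n s \<partial>M2)"
  shows "M1 = M2"
proof (rule cdf_unique[OF assms(1,2)])
  show "cdf M1 = cdf M2"
  proof
    fix a
    have "(\<lambda>n. \<integral>s. phi \<lceil>real (Suc n) * a\<rceil> n s \<partial>M1) \<longlonglongrightarrow> measure M2 {..a}"
      using phi_integral_lim[OF assms(2), of a] assms(3) by simp
    then have "measure M1 {..a} = measure M2 {..a}"
      using phi_integral_lim[OF assms(1), of a] LIMSEQ_unique by blast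
    then show "cdf M1 a = cdf M2 a" by (simp add: cdf_def)
  qed
qed

lemma hfun_bounds:
  assumes "mm_space X d mu"
  shows "0 \<le> hfun X d mu x r" "hfun X d mu x r \<le> 1"
proof -
  interpret prob_space mu using assms unfolding mm_space_def by auto
  show "0 \<le> hfun X d mu x r" "hfun X d mu x r \<le> 1" unfolding hfun_def by auto
qed

lemma hfun_phi_meas_t:
  assumes "mm_space X d mu"
  shows "(\<lambda>t. \<integral>x. phi i n (hfun X d mu x t) \<partial>mu) \<in> borel_measurable lborel"
proof -
  interpret prob_space mu using assms unfolding mm_space_def by auto
  have sw: "(\<lambda>w. (snd w, fst w)) \<in> measurable (lborel \<Otimes>\<^sub>M mu) (mu \<Otimes>\<^sub>M lborel)"
    by (intro measurable_Pair measurable_snd measurable_fst)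
  have "(\<lambda>w. hfun X d mu (fst (snd w, fst w)) (snd (snd w, fst w))) \<in> borel_measurable (lborel \<Otimes>\<^sub>M mu)"
    by (rule measurable_compose[OF sw hfun_joint_meas[OF assms]])
  then have "(\<lambda>w. phi i n (hfun X d mu (snd w) (fst w))) \<in> borel_measurable (lborel \<Otimes>\<^sub>M mu)"
    by simp
  then have "case_prod (\<lambda>t x. phi i n (hfun X d mu x t)) \<in> borel_measurable (lborel \<Otimes>\<^sub>M mu)"
    by (simp add: case_prod_beta')
  then show ?thesis by (rule borel_measurable_lebesgue_integral)
qed

lemma coupling_bound:
  fixes muX :: "'a measure" and muY :: "'b measure"
  assumes mX: "mm_space X dX muX" and mY: "mm_space Y dY muY"
    and p: "p \<in> couplings muX muY"
  shows "(\<integral>\<^sup>+t. indicator {0..} t * ennreal (\<bar>(\<integral>x. phi i n (hfun X dX muX x t) \<partial>muX)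
              - (\<integral>y. phi i n (hfun Y dY muY y t) \<partial>muY)\<bar> / real (Suc n)) \<partial>lborel)
         \<le> (\<integral>\<^sup>+ z. cost_h X dX muX Y dY muY (fst z) (snd z) \<partial>p)"
proof -
  interpret PX: prob_space muX using mX unfolding mm_space_def by auto
  interpret PY: prob_space muY using mY unfolding mm_space_def by auto
  have pp: "prob_space p" and sp: "sets p = sets (muX \<Otimes>\<^sub>M muY)"
    and dX: "distr p muX fst = muX" and dY: "distr p muY snd = muY"
    using p unfolding couplings_def by auto
  interpret P: prob_space p by (rule pp)
  interpret PS: pair_sigma_finite p lborel
    by (simp add: pair_sigma_finite_def P.sigma_finite_measure_axioms lborel.sigma_finite_measure_axioms)
  have fm[measurable]: "fst \<in> measurable p muX"
    using measurable_cong_sets[OF sp refl] measurable_fst by blast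
  have sm[measurable]: "snd \<in> measurable p muY"
    using measurable_cong_sets[OF sp refl] measurable_snd by blast
  define hX where "hX x t = hfun X dX muX x t" for x t
  define hY where "hY y t = hfun Y dY muY y t" for y t
  have hXm: "(\<lambda>x. hX x t) \<in> borel_measurable muX" for t
    unfolding hX_def by (rule hfun_meas[OF mX])
  have hYm: "(\<lambda>y. hY y t) \<in> borel_measurable muY" for t
    unfolding hY_def by (rule hfun_meas[OF mY])
  have hXb: "0 \<le> hX x t" "hX x t \<le> 1" for x t using hfun_bounds[OF mX] by (auto simp: hX_def)
  have hYb: "0 \<le> hY x t" "hY x t \<le> 1" for x t using hfun_bounds[OF mY] by (auto simp: hY_def)
  define F where "F z t = indicator {0..} t * ennreal \<bar>hX (fst z) t - hY (snd z) t\<bar>" for z t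
  have Fm: "case_prod F \<in> borel_measurable (p \<Otimes>\<^sub>M lborel)"
  proof -
    have m1: "(\<lambda>w. (fst (fst w), snd w)) \<in> measurable (p \<Otimes>\<^sub>M lborel) (muX \<Otimes>\<^sub>M lborel)"
      by (intro measurable_Pair measurable_compose[OF measurable_fst fm] measurable_snd)
    have m2: "(\<lambda>w. (snd (fst w), snd w)) \<in> measurable (p \<Otimes>\<^sub>M lborel) (muY \<Otimes>\<^sub>M lborel)"
      by (intro measurable_Pair measurable_compose[OF measurable_fst sm] measurable_snd)
    have a: "(\<lambda>w. hX (fst (fst w)) (snd w)) \<in> borel_measurable (p \<Otimes>\<^sub>M lborel)"
      using measurable_compose[OF m1 hfun_joint_meas[OF mX]] by (simp add: hX_def)
    have b: "(\<lambda>w. hY (snd (fst w)) (snd w)) \<in> borel_measurable (p \<Otimes>\<^sub>M lborel)"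
      using measurable_compose[OF m2 hfun_joint_meas[OF mY]] by (simp add: hY_def)
    have c: "(\<lambda>w. indicator {0..} (snd w :: real) :: ennreal) \<in> borel_measurable (p \<Otimes>\<^sub>M lborel)"
      by (rule measurable_compose[OF measurable_snd], rule borel_measurable_indicator) (simp add: borel_closed)
    show ?thesis unfolding F_def case_prod_beta'
      using a b c by measurable
  qed
  have pt: "indicator {0..} t * ennreal (\<bar>(\<integral>x. phi i n (hX x t) \<partial>muX)
              - (\<integral>y. phi i n (hY y t) \<partial>muY)\<bar> / real (Suc n)) \<le> (\<integral>\<^sup>+z. F z t \<partial>p)" for t
  proof (cases "t \<ge> 0")
    case False then show ?thesis by (simp add: F_def)
  next
    case True
    define A where "A z = phi i n (hX (fst z) t)" for z :: "'a \<times> 'b"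
    define B where "B z = phi i n (hY (snd z) t)" for z :: "'a \<times> 'b"
    have Am: "A \<in> borel_measurable p" unfolding A_def
      using measurable_compose[OF fm hXm] by measurable
    have Bm: "B \<in> borel_measurable p" unfolding B_def
      using measurable_compose[OF sm hYm] by measurable
    have Ai: "integrable p A"
      by (rule P.integrable_const_bound[where B=1]) (use Am phi_bounds in \<open>auto simp: A_def\<close>)
    have Bi: "integrable p B"
      by (rule P.integrable_const_bound[where B=1]) (use Bm phi_bounds in \<open>auto simp: B_def\<close>)
    have Dm: "(\<lambda>z. \<bar>hX (fst z) t - hY (snd z) t\<bar>) \<in> borel_measurable p"
      using measurable_compose[OF fm hXm] measurable_compose[OF sm hYm] by measurable
    have hd: "\<bar>hX a t - hY b t\<bar> \<le> 1" for a b
      using hXb[of a t] hYb[of b t] by (simp add: abs_le_iff)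
    have Di: "integrable p (\<lambda>z. \<bar>hX (fst z) t - hY (snd z) t\<bar>)"
      by (rule P.integrable_const_bound[where B=1]) (use Dm hd in auto)
    have eX: "(\<integral>x. phi i n (hX x t) \<partial>muX) = integral\<^sup>L p A"
    proof -
      have "(\<integral>x. phi i n (hX x t) \<partial>muX) = (\<integral>x. phi i n (hX x t) \<partial>distr p muX fst)"
        by (simp add: dX)
      also have "\<dots> = integral\<^sup>L p A" unfolding A_def
        by (rule integral_distr[OF fm]) (use hXm in measurable)
      finally show ?thesis .
    qed
    have eY: "(\<integral>y. phi i n (hY y t) \<partial>muY) = integral\<^sup>L p B"
    proof -
      have "(\<integral>y. phi i n (hY y t) \<partial>muY) = (\<integral>y. phi i n (hY y t) \<partial>distr p muY snd)"
        by (simp add: dY)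
      also have "\<dots> = integral\<^sup>L p B" unfolding B_def
        by (rule integral_distr[OF sm]) (use hYm in measurable)
      finally show ?thesis .
    qed
    have ABi: "integrable p (\<lambda>z. \<bar>A z - B z\<bar>)" using Ai Bi by auto
    have "\<bar>integral\<^sup>L p A - integral\<^sup>L p B\<bar> = \<bar>\<integral>z. A z - B z \<partial>p\<bar>"
      using Ai Bi by simp
    also have "\<dots> \<le> (\<integral>z. \<bar>A z - B z\<bar> \<partial>p)"
      by (rule integral_abs_bound)
    also have "\<dots> \<le> (\<integral>z. real (Suc n) * \<bar>hX (fst z) t - hY (snd z) t\<bar> \<partial>p)"
      by (rule integral_mono) (use ABi Di phi_lip in \<open>auto simp: A_def B_def\<close>)
    also have "\<dots> = real (Suc n) * (\<integral>z. \<bar>hX (fst z) t - hY (snd z) t\<bar> \<partial>p)"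
      by simp
    finally have "\<bar>integral\<^sup>L p A - integral\<^sup>L p B\<bar> / real (Suc n)
        \<le> (\<integral>z. \<bar>hX (fst z) t - hY (snd z) t\<bar> \<partial>p)"
      by (simp add: field_simps)
    then have "ennreal (\<bar>integral\<^sup>L p A - integral\<^sup>L p B\<bar> / real (Suc n))
        \<le> ennreal (\<integral>z. \<bar>hX (fst z) t - hY (snd z) t\<bar> \<partial>p)"
      by (rule ennreal_leI)
    also have "\<dots> = (\<integral>\<^sup>+z. ennreal \<bar>hX (fst z) t - hY (snd z) t\<bar> \<partial>p)"
      by (rule nn_integral_eq_integral[symmetric]) (use Di in auto)
    also have "\<dots> = (\<integral>\<^sup>+z. F z t \<partial>p)"
      using True by (simp add: F_def)
    finally show ?thesis using True eX eY by simp
  qed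
  have "(\<integral>\<^sup>+t. indicator {0..} t * ennreal (\<bar>(\<integral>x. phi i n (hX x t) \<partial>muX)
              - (\<integral>y. phi i n (hY y t) \<partial>muY)\<bar> / real (Suc n)) \<partial>lborel)
      \<le> (\<integral>\<^sup>+t. \<integral>\<^sup>+z. F z t \<partial>p \<partial>lborel)"
    by (rule nn_integral_mono) (rule pt)
  also have "\<dots> = (\<integral>\<^sup>+z. \<integral>\<^sup>+t. F z t \<partial>lborel \<partial>p)"
    by (rule PS.Fubini'[OF Fm])
  also have "\<dots> = (\<integral>\<^sup>+ z. cost_h X dX muX Y dY muY (fst z) (snd z) \<partial>p)"
    by (simp add: F_def cost_h_def hX_def hY_def)
  finally show ?thesis by (simp add: hX_def hY_def)
qed

theorem lemma6p5:
  fixes X :: "'a set" and dX :: "'a \<Rightarrow> 'a \<Rightarrow> real" and muX :: "'a measure"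
    and Y :: "'b set" and dY :: "'b \<Rightarrow> 'b \<Rightarrow> real" and muY :: "'b measure"
  assumes "mm_space X dX muX" and "mm_space Y dY muY"
    and "L_U_h X dX muX Y dY muY = 0"
  shows "AE r in lborel. r > 0 \<longrightarrow>
           distr muX borel (\<lambda>x. hfun X dX muX x r) = distr muY borel (\<lambda>y. hfun Y dY muY y r)"
proof -
  interpret PX: prob_space muX using assms(1) unfolding mm_space_def by auto
  interpret PY: prob_space muY using assms(2) unfolding mm_space_def by auto
  define IX where "IX i n t = (\<integral>x. phi i n (hfun X dX muX x t) \<partial>muX)" for i n t
  define IY where "IY i n t = (\<integral>y. phi i n (hfun Y dY muY y t) \<partial>muY)" for i n t
  have key: "AE t in lborel. 0 \<le> t \<longrightarrow> IX i n t = IY i n t" for i n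
  proof -
    define G where "G t = indicator {0..} t * ennreal (\<bar>IX i n t - IY i n t\<bar> / real (Suc n))" for t :: real
    have "(\<integral>\<^sup>+ t. G t \<partial>lborel) \<le> L_U_h X dX muX Y dY muY"
      unfolding L_U_h_def G_def IX_def IY_def
      by (rule INF_greatest) (rule coupling_bound[OF assms(1,2)])
    then have z: "(\<integral>\<^sup>+ t. G t \<partial>lborel) = 0" using assms(3) by simp
    have m1: "IX i n \<in> borel_measurable lborel"
      unfolding IX_def[abs_def] by (rule hfun_phi_meas_t[OF assms(1)])
    have m2: "IY i n \<in> borel_measurable lborel"
      unfolding IY_def[abs_def] by (rule hfun_phi_meas_t[OF assms(2)])
    have m3: "(indicator {0..} :: real \<Rightarrow> ennreal) \<in> borel_measurable lborel"
      by (rule borel_measurable_indicator) (simp add: borel_closed)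
    have Gm: "G \<in> borel_measurable lborel"
      unfolding G_def[abs_def] using m1 m2 m3 by measurable
    have "AE t in lborel. G t = 0" using z nn_integral_0_iff_AE[OF Gm] by simp
    then show ?thesis
    proof (rule eventually_mono)
      fix t assume "G t = 0"
      then show "0 \<le> t \<longrightarrow> IX i n t = IY i n t"
        by (auto simp: G_def)
    qed
  qed
  have "AE t in lborel. \<forall>i n. 0 \<le> t \<longrightarrow> IX i n t = IY i n t"
    unfolding AE_all_countable using key by blast
  then show ?thesis
  proof (rule eventually_mono)
    fix r :: real assume all: "\<forall>i n. 0 \<le> r \<longrightarrow> IX i n r = IY i n r"
    show "r > 0 \<longrightarrow> distr muX borel (\<lambda>x. hfun X dX muX x r) = distr muY borel (\<lambda>y. hfun Y dY muY y r)"
    proof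
      assume "r > 0"
      have mX: "(\<lambda>x. hfun X dX muX x r) \<in> borel_measurable muX" by (rule hfun_meas[OF assms(1)])
      have mY: "(\<lambda>y. hfun Y dY muY y r) \<in> borel_measurable muY" by (rule hfun_meas[OF assms(2)])
      show "distr muX borel (\<lambda>x. hfun X dX muX x r) = distr muY borel (\<lambda>y. hfun Y dY muY y r)"
      proof (rule dist_eq_phi)
        show "real_distribution (distr muX borel (\<lambda>x. hfun X dX muX x r))"
          unfolding real_distribution_def real_distribution_axioms_def
          using PX.prob_space_distr[OF mX] by simp
        show "real_distribution (distr muY borel (\<lambda>y. hfun Y dY muY y r))"
          unfolding real_distribution_def real_distribution_axioms_def
          using PY.prob_space_distr[OF mY] by simp
        fix i n
        have "(\<integral>s. phi i n s \<partial>distr muX borel (\<lambda>x. hfun X dX muX x r)) = IX i n r"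
          unfolding IX_def by (rule integral_distr[OF mX]) simp
        moreover have "(\<integral>s. phi i n s \<partial>distr muY borel (\<lambda>y. hfun Y dY muY y r)) = IY i n r"
          unfolding IY_def by (rule integral_distr[OF mY]) simp
        ultimately show "(\<integral>s. phi i n s \<partial>distr muX borel (\<lambda>x. hfun X dX muX x r))
            = (\<integral>s. phi i n s \<partial>distr muY borel (\<lambda>y. hfun Y dY muY y r))"
          using all \<open>r > 0\<close> by simp
      qed
    qed
  qed
qed

end
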